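(* Let $\Omega\subset\mathbb{R}^n$ ($n\ge3$) be a bounded Lipschitz domain and assume: $p_0,p_1$ measurable with $2\le p_0^-\le p_0\le p_0^+<\infty$, $1<p_1^-\le p_1\le p_1^+<\infty$, $p_0\in C^1(\bar\Omega)$, $p_1\in C^0(\bar\Omega)$; $\alpha$ measurable with $1\le\alpha^-\le\alpha\le\alpha^+<\infty$ and $\alpha\ge p_0+\varepsilon$ for some $\varepsilon>0$; $c$ Carathéodory with $|c(x,\tau)|\le c_0|\tau|^{\alpha-1}+c_1$, $c(x,\tau)\tau\ge c_2|\tau|^{\alpha}$, with $c_0,c_2\in L^\infty(\Omega)$, $c_1\in L^{\alpha'(x)}(\Omega)$ nonnegative and $c_2\ge\tilde C>0$. Then the operator $B$ defined by $$\langle B(u),v\rangle=\sum_{i=1}^n\int_\Omega|u|^{p_0(x)-2}D_iu\,D_iv\,dx+\int_\Omega c(x,u)v\,dx$$ (i.e. $B(u)=-\sum_iD_i(|u|^{p_0-2}D_iu)+c(x,u)$) is a bounded operator from $\mathring S_{1,q_0(x)(p_0(x)-2),q_0(x),\alpha(x)}(\Omega)$ into $W^{-1,q_0(x)}(\Omega)+L^{\alpha'(x)}(\Omega)$.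
   Context: $D_i=\partial/\partial x_i$; $q_0=p_0/(p_0-1)$, $\alpha'=\alpha/(\alpha-1)$; $W^{-1,q_0(x)}(\Omega)=(W_0^{1,p_0(x)}(\Omega))^*$; $L^{p(x)}$ denotes variable exponent Lebesgue spaces. For measurable $\gamma,\beta,\theta$, $S_{1,\gamma(x),\beta(x),\theta(x)}(\Omega)=\{u\in L^1(\Omega):\int_\Omega|u|^{\theta(x)}dx+\sum_{i=1}^n\int_\Omega|u|^{\gamma(x)}|D_iu|^{\beta(x)}dx<\infty\}$, with pseudo-norm $[u]=\inf\{\lambda>0:\int_\Omega|u/\lambda|^{\theta(x)}dx+\sum_i\int_\Omega\big|\,|u|^{\gamma/\beta}D_iu/\lambda^{\gamma/\beta+1}\big|^{\beta(x)}dx\le1\}$; $\mathring S$ denotes the subset of functions vanishing on $\partial\Omega$. Boundedness means bounded sets (with respect to this pseudo-norm) are mapped into bounded sets. *)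

theory Defs
  imports "HOL-Analysis.Analysis"
begin

(* power with the convention 0^0 = 1 (Isabelle's powr has 0 powr 0 = 0); used for t >= 0 *)
definition pw :: "real \<Rightarrow> real \<Rightarrow> real" where
  "pw t a = (if a = 0 then 1 else t powr a)"

definition pd :: "'n::finite \<Rightarrow> (real^'n \<Rightarrow> real) \<Rightarrow> real^'n \<Rightarrow> real" where
  "pd i f x = frechet_derivative f (at x) (axis i 1)"

fun iter_pd :: "'n::finite list \<Rightarrow> (real^'n \<Rightarrow> real) \<Rightarrow> real^'n \<Rightarrow> real" where
  "iter_pd [] f = f"
| "iter_pd (i # is) f = pd i (iter_pd is f)"

definition smooth_fun :: "(real^'n::finite \<Rightarrow> real) \<Rightarrow> bool" where
  "smooth_fun f \<longleftrightarrow> (\<forall>is x. iter_pd is f differentiable (at x))"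

definition test_fun :: "(real^'n::finite) set \<Rightarrow> (real^'n \<Rightarrow> real) \<Rightarrow> bool" where
  "test_fun \<Omega> \<phi> \<longleftrightarrow> smooth_fun \<phi> \<and> compact (closure {x. \<phi> x \<noteq> 0})
      \<and> closure {x. \<phi> x \<noteq> 0} \<subseteq> \<Omega>"

definition loc_integrable :: "(real^'n::finite) set \<Rightarrow> (real^'n \<Rightarrow> real) \<Rightarrow> bool" where
  "loc_integrable \<Omega> f \<longleftrightarrow> (\<forall>K. compact K \<and> K \<subseteq> \<Omega> \<longrightarrow> integrable (lebesgue_on K) f)"

definition weak_deriv :: "(real^'n::finite) set \<Rightarrow> 'n \<Rightarrow> (real^'n \<Rightarrow> real) \<Rightarrow> (real^'n \<Rightarrow> real) \<Rightarrow> bool" where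
  "weak_deriv \<Omega> i u g \<longleftrightarrow> loc_integrable \<Omega> u \<and> loc_integrable \<Omega> g \<and>
     (\<forall>\<phi>. test_fun \<Omega> \<phi> \<longrightarrow>
        (\<integral>x. u x * pd i \<phi> x \<partial>lebesgue_on \<Omega>) = - (\<integral>x. g x * \<phi> x \<partial>lebesgue_on \<Omega>))"

definition zero_ext :: "'a set \<Rightarrow> ('a \<Rightarrow> real) \<Rightarrow> 'a \<Rightarrow> real" where
  "zero_ext \<Omega> f x = (if x \<in> \<Omega> then f x else 0)"

definition lipschitz_domain :: "(real^'n::finite) set \<Rightarrow> bool" where
  "lipschitz_domain \<Omega> \<longleftrightarrow> open \<Omega> \<and> connected \<Omega> \<and> \<Omega> \<noteq> {} \<and>
     (\<forall>x0\<in>frontier \<Omega>. \<exists>r>0. \<exists>e. norm e = 1 \<and> (\<exists>L (\<gamma>::real^'n \<Rightarrow> real). L-lipschitz_on UNIV \<gamma> \<and>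
        (\<forall>y. \<gamma> y = \<gamma> (y - (y \<bullet> e) *\<^sub>R e)) \<and>
        \<Omega> \<inter> ball x0 r = {y \<in> ball x0 r. y \<bullet> e < \<gamma> y}))"

definition Lvar :: "(real^'n::finite) set \<Rightarrow> (real^'n \<Rightarrow> real) \<Rightarrow> (real^'n \<Rightarrow> real) \<Rightarrow> bool" where
  "Lvar \<Omega> p f \<longleftrightarrow> f \<in> borel_measurable (lebesgue_on \<Omega>) \<and>
     (\<exists>s>0. integrable (lebesgue_on \<Omega>) (\<lambda>x. pw (\<bar>f x\<bar> / s) (p x)))"

definition lux :: "(real^'n::finite) set \<Rightarrow> (real^'n \<Rightarrow> real) \<Rightarrow> (real^'n \<Rightarrow> real) \<Rightarrow> real" where
  "lux \<Omega> p f = Inf {s. s > 0 \<and> integrable (lebesgue_on \<Omega>) (\<lambda>x. pw (\<bar>f x\<bar> / s) (p x))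
       \<and> (\<integral>x. pw (\<bar>f x\<bar> / s) (p x) \<partial>lebesgue_on \<Omega>) \<le> 1}"

definition S_mem :: "(real^'n::finite) set \<Rightarrow> (real^'n \<Rightarrow> real) \<Rightarrow> (real^'n \<Rightarrow> real) \<Rightarrow>
    (real^'n \<Rightarrow> real) \<Rightarrow> (real^'n \<Rightarrow> real) \<Rightarrow> ('n \<Rightarrow> real^'n \<Rightarrow> real) \<Rightarrow> bool" where
  "S_mem \<Omega> \<gamma> \<beta> \<theta> u Du \<longleftrightarrow> integrable (lebesgue_on \<Omega>) u \<and>
     (\<forall>i. weak_deriv \<Omega> i u (Du i)) \<and>
     integrable (lebesgue_on \<Omega>) (\<lambda>x. pw \<bar>u x\<bar> (\<theta> x)) \<and>
     (\<forall>i. integrable (lebesgue_on \<Omega>) (\<lambda>x. pw \<bar>u x\<bar> (\<gamma> x) * pw \<bar>Du i x\<bar> (\<beta> x)))"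

(* membership in the subset of functions vanishing on the boundary: the zero extension
   of u is weakly differentiable on R^n with derivatives the zero extensions of D_i u *)
definition S0_mem :: "(real^'n::finite) set \<Rightarrow> (real^'n \<Rightarrow> real) \<Rightarrow> (real^'n \<Rightarrow> real) \<Rightarrow>
    (real^'n \<Rightarrow> real) \<Rightarrow> (real^'n \<Rightarrow> real) \<Rightarrow> ('n \<Rightarrow> real^'n \<Rightarrow> real) \<Rightarrow> bool" where
  "S0_mem \<Omega> \<gamma> \<beta> \<theta> u Du \<longleftrightarrow> S_mem \<Omega> \<gamma> \<beta> \<theta> u Du \<and>
     (\<forall>i. weak_deriv UNIV i (zero_ext \<Omega> u) (zero_ext \<Omega> (Du i)))"

definition S_pnorm :: "(real^'n::finite) set \<Rightarrow> (real^'n \<Rightarrow> real) \<Rightarrow> (real^'n \<Rightarrow> real) \<Rightarrow>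
    (real^'n \<Rightarrow> real) \<Rightarrow> (real^'n \<Rightarrow> real) \<Rightarrow> ('n \<Rightarrow> real^'n \<Rightarrow> real) \<Rightarrow> real" where
  "S_pnorm \<Omega> \<gamma> \<beta> \<theta> u Du = Inf {s. s > 0 \<and>
     (\<integral>x. pw (\<bar>u x\<bar> / s) (\<theta> x) \<partial>lebesgue_on \<Omega>) +
     (\<Sum>i\<in>UNIV. \<integral>x. pw \<bar>pw \<bar>u x\<bar> (\<gamma> x / \<beta> x) * Du i x / pw s (\<gamma> x / \<beta> x + 1)\<bar> (\<beta> x)
        \<partial>lebesgue_on \<Omega>) \<le> 1}"

definition sob_norm :: "(real^'n::finite) set \<Rightarrow> (real^'n \<Rightarrow> real) \<Rightarrow> (real^'n \<Rightarrow> real) \<Rightarrow> real" where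
  "sob_norm \<Omega> p \<phi> = lux \<Omega> p \<phi> + (\<Sum>i\<in>UNIV. lux \<Omega> p (pd i \<phi>))"

end

theory Submission
  imports Defs
begin


lemma int_le_gen:
  fixes f g :: "'a \<Rightarrow> real"
  assumes "\<And>x. x \<in> space M \<Longrightarrow> 0 \<le> f x" "\<And>x. x \<in> space M \<Longrightarrow> f x \<le> g x" "integrable M g"
  shows "integral\<^sup>L M f \<le> integral\<^sup>L M g"
proof (cases "integrable M f")
  case True thus ?thesis using assms by (intro integral_mono) auto
next
  case False
  hence "integral\<^sup>L M f = 0" by (simp add: not_integrable_integral_eq)
  moreover have "0 \<le> integral\<^sup>L M g" using assms by (intro integral_nonneg_AE AE_I2) (meson order_trans)
  ultimately show ?thesis by simp
qed

lemma abs_int_le: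
  fixes f g :: "'a \<Rightarrow> real"
  assumes "\<And>x. x \<in> space M \<Longrightarrow> \<bar>f x\<bar> \<le> g x" "integrable M g"
  shows "\<bar>integral\<^sup>L M f\<bar> \<le> integral\<^sup>L M g"
proof -
  have "\<bar>integral\<^sup>L M f\<bar> \<le> integral\<^sup>L M (\<lambda>x. \<bar>f x\<bar>)"
    using integral_norm_bound[of M f] by simp
  also have "\<dots> \<le> integral\<^sup>L M g" using assms by (intro int_le_gen) auto
  finally show ?thesis .
qed

lemma pw_nonneg: "0 \<le> t \<Longrightarrow> 0 \<le> pw t a"
  by (simp add: pw_def)

lemma pw_nz: "a \<noteq> 0 \<Longrightarrow> pw t a = t powr a"
  by (simp add: pw_def)

lemma pw_measurable[measurable]:
  fixes f a :: "'a \<Rightarrow> real"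
  assumes [measurable]: "f \<in> borel_measurable M" "a \<in> borel_measurable M"
  shows "(\<lambda>x. pw (f x) (a x)) \<in> borel_measurable M"
  unfolding pw_def by measurable



lemma open_sets_lebesgue: "open \<Omega> \<Longrightarrow> (\<Omega>::('a::euclidean_space) set) \<in> sets lebesgue"
  by (simp add: borel_open sets_completionI_sets)

lemma floor_approx:
  fixes t :: real
  shows "(\<lambda>k. real_of_int \<lfloor>real (Suc k) * t\<rfloor> / real (Suc k)) \<longlonglongrightarrow> t"
proof (rule tendsto_sandwich[of "\<lambda>k. t - inverse (real (Suc k))" _ sequentially "\<lambda>k. t"])
  show "\<forall>\<^sub>F k in sequentially. t - inverse (real (Suc k)) \<le> real_of_int \<lfloor>real (Suc k) * t\<rfloor> / real (Suc k)"
  proof (intro always_eventually allI)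
    fix k
    have "real (Suc k) * t - 1 \<le> real_of_int \<lfloor>real (Suc k) * t\<rfloor>" by linarith
    hence "(real (Suc k) * t - 1) / real (Suc k) \<le> real_of_int \<lfloor>real (Suc k) * t\<rfloor> / real (Suc k)"
      by (rule divide_right_mono) simp
    moreover have "t - inverse (real (Suc k)) = (real (Suc k) * t - 1) / real (Suc k)"
      by (simp add: field_simps)
    ultimately show "t - inverse (real (Suc k)) \<le> real_of_int \<lfloor>real (Suc k) * t\<rfloor> / real (Suc k)"
      by simp
  qed
  show "\<forall>\<^sub>F k in sequentially. real_of_int \<lfloor>real (Suc k) * t\<rfloor> / real (Suc k) \<le> t"
  proof (intro always_eventually allI)
    fix k
    have "real_of_int \<lfloor>real (Suc k) * t\<rfloor> \<le> real (Suc k) * t" by linarith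
    hence "real_of_int \<lfloor>real (Suc k) * t\<rfloor> / real (Suc k) \<le> real (Suc k) * t / real (Suc k)"
      by (rule divide_right_mono) simp
    then show "real_of_int \<lfloor>real (Suc k) * t\<rfloor> / real (Suc k) \<le> t"
      by simp
  qed
  show "(\<lambda>k. t - inverse (real (Suc k))) \<longlonglongrightarrow> t"
    using tendsto_diff[OF tendsto_const LIMSEQ_inverse_real_of_nat, of t] by simp
qed simp

lemma meas_from_zero_ext:
  fixes \<Omega> :: "(real^'n::finite) set"
  assumes "open \<Omega>" "loc_integrable UNIV (zero_ext \<Omega> w)"
  shows "w \<in> borel_measurable (lebesgue_on \<Omega>)"
proof -
  define z where "z = zero_ext \<Omega> w"
  have "\<And>k. integrable (lebesgue_on (cball 0 (real k))) z"
    using assms(2) unfolding loc_integrable_def z_def by auto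
  hence "\<And>k. z \<in> borel_measurable (lebesgue_on (cball 0 (real k)))"
    by (rule borel_measurable_integrable)
  hence m: "\<And>k. (\<lambda>x. indicator (cball 0 (real k)) x *\<^sub>R z x) \<in> borel_measurable lebesgue"
    by (subst (asm) borel_measurable_restrict_space_iff) auto
  have "z \<in> borel_measurable lebesgue"
  proof (rule borel_measurable_LIMSEQ_real[OF _ m])
    fix x :: "real^'n"
    have "\<forall>\<^sub>F k in sequentially. indicator (cball 0 (real k)) x *\<^sub>R z x = z x"
    proof (rule eventually_sequentiallyI[of "nat \<lceil>norm x\<rceil>"])
      fix k assume "nat \<lceil>norm x\<rceil> \<le> k"
      hence "norm x \<le> real k" by linarith
      thus "indicator (cball 0 (real k)) x *\<^sub>R z x = z x" by (simp add: indicator_def)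
    qed
    thus "(\<lambda>k. indicator (cball 0 (real k)) x *\<^sub>R z x) \<longlonglongrightarrow> z x"
      by (rule tendsto_eventually)
  qed
  moreover have "(\<lambda>x. indicator \<Omega> x *\<^sub>R w x) = z"
    by (auto simp: z_def zero_ext_def indicator_def)
  ultimately show ?thesis
    using open_sets_lebesgue[OF assms(1)]
    by (subst borel_measurable_restrict_space_iff) auto
qed

lemma carath_meas:
  fixes \<Omega> :: "(real^'n::finite) set" and c :: "real^'n \<Rightarrow> real \<Rightarrow> real"
  assumes O: "\<Omega> \<in> sets lebesgue"
    and cm: "\<And>\<tau>. (\<lambda>x. c x \<tau>) \<in> borel_measurable (lebesgue_on \<Omega>)"
    and cc: "AE x in lebesgue_on \<Omega>. continuous_on UNIV (c x)"
    and um: "u \<in> borel_measurable (lebesgue_on \<Omega>)"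
  shows "(\<lambda>x. c x (u x)) \<in> borel_measurable (lebesgue_on \<Omega>)"
proof -
  define cz where "cz \<tau> x = indicator \<Omega> x * c x \<tau>" for \<tau> x
  define uz where "uz x = indicator \<Omega> x * u x" for x
  have czm: "\<And>\<tau>. cz \<tau> \<in> borel_measurable lebesgue"
    using cm O unfolding cz_def by (subst (asm) borel_measurable_restrict_space_iff) auto
  have uzm[measurable]: "uz \<in> borel_measurable lebesgue"
    using um O unfolding uz_def by (subst (asm) borel_measurable_restrict_space_iff) auto
  define h where "h k x = cz (real_of_int \<lfloor>real (Suc k) * uz x\<rfloor> / real (Suc k)) x" for k x
  have hm: "h k \<in> borel_measurable lebesgue" for k
  proof -
    have fl: "(\<lambda>x. \<lfloor>real (Suc k) * uz x\<rfloor>) \<in> measurable lebesgue (count_space UNIV)"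
      by measurable
    show ?thesis unfolding h_def
      by (rule measurable_compose_countable[where f="\<lambda>j x. cz (real_of_int j / real (Suc k)) x", OF czm fl])
  qed
  have "AE x in lebesgue. x \<in> \<Omega> \<longrightarrow> continuous_on UNIV (c x)"
    using cc O by (subst (asm) AE_restrict_space_iff) auto
  then obtain N where N0: "{x \<in> space lebesgue. \<not> (x \<in> \<Omega> \<longrightarrow> continuous_on UNIV (c x))} \<subseteq> N"
     and N1: "N \<in> null_sets lebesgue"
    unfolding eventually_ae_filter by blast
  have N: "N \<in> null_sets lebesgue" "\<And>x. x \<notin> N \<Longrightarrow> x \<in> \<Omega> \<longrightarrow> continuous_on UNIV (c x)"
    using N0 N1 by auto
  have Ns: "N \<in> sets lebesgue" using N(1) by auto
  define G where "G x = indicator (- N) x * (indicator \<Omega> x * c x (u x))" for x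
  have "G \<in> borel_measurable lebesgue"
  proof (rule borel_measurable_LIMSEQ_real[where u="\<lambda>k x. indicator (- N) x * h k x"])
    fix k show "(\<lambda>x. indicator (- N) x * h k x) \<in> borel_measurable lebesgue"
      using hm Ns by measurable
  next
    fix x :: "real^'n"
    show "(\<lambda>k. indicator (- N) x * h k x) \<longlonglongrightarrow> G x"
    proof (cases "x \<in> N \<or> x \<notin> \<Omega>")
      case True thus ?thesis by (auto simp: G_def h_def cz_def indicator_def)
    next
      case False
      hence x: "x \<notin> N" "x \<in> \<Omega>" by auto
      hence cont: "continuous_on UNIV (c x)" using N(2) by auto
      have "(\<lambda>k. c x (real_of_int \<lfloor>real (Suc k) * u x\<rfloor> / real (Suc k))) \<longlonglongrightarrow> c x (u x)"
        using continuous_on_tendsto_compose[OF cont floor_approx] by simp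
      thus ?thesis using x by (simp add: G_def h_def cz_def uz_def indicator_def)
    qed
  qed
  moreover have "AE x in lebesgue. G x = indicator \<Omega> x *\<^sub>R c x (u x)"
    using N(1) by (rule AE_I') (auto simp: G_def indicator_def)
  ultimately have "(\<lambda>x. indicator \<Omega> x *\<^sub>R c x (u x)) \<in> borel_measurable lebesgue"
    by (rule borel_measurable_AE)
  thus ?thesis using O by (subst borel_measurable_restrict_space_iff) auto
qed



lemma test_diff: "test_fun \<Omega> \<phi> \<Longrightarrow> \<phi> differentiable (at x)"
  unfolding test_fun_def smooth_fun_def
  by (metis iter_pd.simps(1))

lemma test_pd_diff: "test_fun \<Omega> \<phi> \<Longrightarrow> pd i \<phi> differentiable (at x)"
  unfolding test_fun_def smooth_fun_def
  by (metis iter_pd.simps)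

lemma test_pd_cont: "test_fun \<Omega> \<phi> \<Longrightarrow> continuous_on UNIV (pd i \<phi>)"
  by (meson continuous_at_imp_continuous_on differentiable_imp_continuous_within test_pd_diff)

lemma test_cont: "test_fun \<Omega> \<phi> \<Longrightarrow> continuous_on UNIV \<phi>"
  by (meson continuous_at_imp_continuous_on differentiable_imp_continuous_within test_diff)

lemma pd_lin:
  assumes "test_fun \<Omega> \<phi>" "test_fun \<Omega> \<psi>"
  shows "pd i (\<lambda>x. a * \<phi> x + b * \<psi> x) x = a * pd i \<phi> x + b * pd i \<psi> x"
proof -
  have d1: "(\<phi> has_derivative frechet_derivative \<phi> (at x)) (at x)"
    using test_diff[OF assms(1)] frechet_derivative_works by blast
  have d2: "(\<psi> has_derivative frechet_derivative \<psi> (at x)) (at x)"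
    using test_diff[OF assms(2)] frechet_derivative_works by blast
  have "((\<lambda>x. a * \<phi> x + b * \<psi> x) has_derivative
        (\<lambda>h. a * frechet_derivative \<phi> (at x) h + b * frechet_derivative \<psi> (at x) h)) (at x)"
    by (intro has_derivative_add has_derivative_mult_right d1 d2)
  from frechet_derivative_at[OF this] show ?thesis
    unfolding pd_def by (metis (no_types))
qed

lemma cont_bounded_on:
  fixes \<psi> :: "real^'n::finite \<Rightarrow> real"
  assumes "continuous_on UNIV \<psi>" "bounded \<Omega>"
  shows "\<exists>B. \<forall>x\<in>\<Omega>. \<bar>\<psi> x\<bar> \<le> B"
proof -
  have "compact (closure \<Omega>)" using assms(2) by (simp add: compact_closure)
  hence "compact (\<psi> ` closure \<Omega>)"
    using assms(1) by (meson compact_continuous_image continuous_on_subset subset_UNIV)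
  then obtain B where "\<forall>y\<in>\<psi> ` closure \<Omega>. norm y \<le> B"
    using compact_imp_bounded bounded_iff by metis
  thus ?thesis using closure_subset by fastforce
qed

definition luxset where
  "luxset \<Omega> p f = {s. s > 0 \<and> integrable (lebesgue_on \<Omega>) (\<lambda>x. pw (\<bar>f x\<bar> / s) (p x))
       \<and> (\<integral>x. pw (\<bar>f x\<bar> / s) (p x) \<partial>lebesgue_on \<Omega>) \<le> 1}"

lemma lux_eq: "lux \<Omega> p f = Inf (luxset \<Omega> p f)"
  unfolding lux_def luxset_def by simp

lemma inf_bound:
  fixes S :: "real set"
  assumes "S \<noteq> {}" "\<forall>s\<in>S. s > 0" "\<forall>s\<in>S. X \<le> s * k" "0 \<le> k"
  shows "X \<le> Inf S * k"
proof (cases "k = 0")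
  case True
  then obtain s where "s \<in> S" using assms by auto
  thus ?thesis using assms True by fastforce
next
  case False
  hence k: "k > 0" using assms by simp
  have "X / k \<le> Inf S"
    using assms k by (intro cInf_greatest) (auto simp: pos_divide_le_eq)
  thus ?thesis using k by (simp add: pos_divide_le_eq)
qed

lemma inf_nonneg:
  fixes S :: "real set"
  assumes "S \<noteq> {}" "\<forall>s\<in>S. s > 0"
  shows "0 \<le> Inf S"
  using assms by (intro cInf_greatest) auto

lemma inf_lower:
  fixes S :: "real set"
  assumes "s \<in> S" "\<forall>s\<in>S. s > 0"
  shows "Inf S \<le> s"
  using assms by (intro cInf_lower) (auto simp: bdd_below_def intro!: exI[of _ 0] less_imp_le)

lemma luxset_nonempty:
  fixes \<Omega> :: "(real^'n::finite) set"
  assumes O: "bounded \<Omega>" "\<Omega> \<in> sets lebesgue"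
    and fm: "f \<in> borel_measurable (lebesgue_on \<Omega>)" and fb: "\<forall>x\<in>\<Omega>. \<bar>f x\<bar> \<le> B"
    and pm: "p \<in> borel_measurable (lebesgue_on \<Omega>)" and p1: "\<forall>x\<in>\<Omega>. 1 \<le> p x"
  shows "luxset \<Omega> p f \<noteq> {}"
proof -
  have lm: "\<Omega> \<in> lmeasurable" using O by (simp add: bounded_set_imp_lmeasurable)
  interpret F: finite_measure "lebesgue_on \<Omega>" using lm by (rule finite_measure_lebesgue_on)
  define \<mu> where "\<mu> = measure (lebesgue_on \<Omega>) (space (lebesgue_on \<Omega>))"
  have mu0: "0 \<le> \<mu>" by (simp add: \<mu>_def)
  define B' where "B' = max 1 B"
  define s where "s = B' * (\<mu> + 1)"
  have s0: "s > 0" using mu0 by (simp add: s_def B'_def)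
  have bd: "pw (\<bar>f x\<bar> / s) (p x) \<le> 1 / (\<mu> + 1)" if x: "x \<in> \<Omega>" for x
  proof -
    have t0: "0 \<le> \<bar>f x\<bar> / s" using s0 by simp
    have "\<bar>f x\<bar> / s \<le> B' / s" using fb x s0 by (intro divide_right_mono) (auto simp: B'_def)
    also have "\<dots> = 1 / (\<mu> + 1)" using mu0 by (simp add: s_def B'_def)
    finally have t1: "\<bar>f x\<bar> / s \<le> 1 / (\<mu> + 1)" .
    hence t2: "\<bar>f x\<bar> / s \<le> 1" using mu0 by (smt (verit) divide_le_eq_1_pos)
    have "pw (\<bar>f x\<bar> / s) (p x) = (\<bar>f x\<bar> / s) powr p x" using p1 x by (intro pw_nz) fastforce
    also have "\<dots> \<le> \<bar>f x\<bar> / s"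
    proof (cases "\<bar>f x\<bar> / s = 0")
      case True thus ?thesis by (simp only: True) simp
    next
      case False thus ?thesis using t0 t2 p1 x s0 by (intro powr_le_one_le) auto
    qed
    finally show ?thesis using t1 by simp
  qed
  have meas: "(\<lambda>x. pw (\<bar>f x\<bar> / s) (p x)) \<in> borel_measurable (lebesgue_on \<Omega>)"
    using fm pm by measurable
  have sp: "space (lebesgue_on \<Omega>) = \<Omega>" by simp
  have int: "integrable (lebesgue_on \<Omega>) (\<lambda>x. pw (\<bar>f x\<bar> / s) (p x))"
    using bd s0 by (intro F.integrable_const_bound[OF _ meas, where B="1 / (\<mu> + 1)"] AE_I2)
      (auto simp: pw_nonneg)
  have "(\<integral>x. pw (\<bar>f x\<bar> / s) (p x) \<partial>lebesgue_on \<Omega>) \<le> (\<integral>x. 1 / (\<mu> + 1) \<partial>lebesgue_on \<Omega>)"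
    using bd by (intro integral_mono int) auto
  also have "\<dots> = \<mu> / (\<mu> + 1)" by (simp add: \<mu>_def)
  also have "\<dots> \<le> 1" using mu0 by simp
  finally show ?thesis using s0 int unfolding luxset_def by blast
qed



lemma pw_prod:
  fixes a d E q :: real
  assumes "a \<ge> 0" "E \<ge> 0" "q > 0"
  shows "pw (pw a E * \<bar>d\<bar>) q = pw a (q * E) * pw \<bar>d\<bar> q"
proof (cases "E = 0")
  case True thus ?thesis using assms by (simp add: pw_def)
next
  case E: False
  show ?thesis
  proof (cases "a = 0")
    case True thus ?thesis using assms E by (simp add: pw_def)
  next
    case False
    hence a: "a > 0" using assms by simp
    have "pw (pw a E * \<bar>d\<bar>) q = (a powr E * \<bar>d\<bar>) powr q" using assms E by (simp add: pw_def)
    also have "\<dots> = (a powr E) powr q * \<bar>d\<bar> powr q" using a by (simp add: powr_mult)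
    also have "\<dots> = a powr (q * E) * \<bar>d\<bar> powr q" by (simp add: powr_powr mult.commute)
    finally show ?thesis using assms E by (simp add: pw_def)
  qed
qed

lemma key_pw:
  fixes a d s p :: real
  assumes "a \<ge> 0" "s > 0" "p \<ge> 2"
  shows "pw \<bar>pw a ((p / (p - 1)) * (p - 2) / (p / (p - 1))) * d / pw s ((p / (p - 1)) * (p - 2) / (p / (p - 1)) + 1)\<bar> (p / (p - 1))
       = pw a ((p / (p - 1)) * (p - 2)) * pw \<bar>d\<bar> (p / (p - 1)) / s powr p"
proof -
  define q where "q = p / (p - 1)"
  have q0: "q > 0" using assms by (simp add: q_def)
  have e: "q * (p - 2) / q = p - 2" using q0 by simp
  have ps: "pw s (p - 2 + 1) = s powr (p - 1)" using assms by (simp add: pw_def)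
  have qp: "q * (p - 1) = p" using assms by (simp add: q_def)
  have "\<bar>pw a (p - 2) * d / s powr (p - 1)\<bar> = (pw a (p - 2) * \<bar>d\<bar>) / s powr (p - 1)"
    using assms by (simp add: abs_mult pw_nonneg)
  hence "pw \<bar>pw a (p - 2) * d / s powr (p - 1)\<bar> q = pw ((pw a (p - 2) * \<bar>d\<bar>) / s powr (p - 1)) q"
    by (rule arg_cong[where f="\<lambda>t. pw t q"])
  also have "\<dots> = pw (pw a (p - 2) * \<bar>d\<bar>) q / (s powr (p - 1)) powr q"
    using q0 assms by (simp add: pw_def powr_divide pw_nonneg)
  also have "\<dots> = pw a (q * (p - 2)) * pw \<bar>d\<bar> q / s powr p"
    using assms q0 by (simp add: pw_prod powr_powr qp mult.commute[of "p - 1" q])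
  finally show ?thesis unfolding q_def[symmetric] e ps .
qed

lemma young2:
  fixes a b p :: real
  assumes "a \<ge> 0" "b \<ge> 0" "p \<ge> 2"
  shows "a * b \<le> a powr (p / (p - 1)) + b powr p"
proof -
  have "a * b \<le> a powr (p / (p - 1)) / (p / (p - 1)) + b powr p / p"
    using assms by (intro Youngs_inequality) (auto simp: field_simps)
  also have "\<dots> \<le> a powr (p / (p - 1)) + b powr p"
  proof (intro add_mono)
    have c: "p / (p - 1) \<ge> 1" using assms by simp
    show "a powr (p / (p - 1)) / (p / (p - 1)) \<le> a powr (p / (p - 1))"
      using divide_left_mono[of 1 "p / (p - 1)" "a powr (p / (p - 1))"] c by simp
    show "b powr p / p \<le> b powr p"
      using divide_left_mono[of 1 p "b powr p"] assms by simp
  qed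
  finally show ?thesis .
qed

lemma holder_pt:
  fixes a d b s p :: real
  assumes "a \<ge> 0" "s > 0" "p \<ge> 2"
  shows "\<bar>pw a (p - 2) * d * b\<bar> \<le> s * (pw a ((p / (p - 1)) * (p - 2)) * pw \<bar>d\<bar> (p / (p - 1)) + pw (\<bar>b\<bar> / s) p)"
proof -
  define q where "q = p / (p - 1)"
  have q0: "q > 0" using assms by (simp add: q_def)
  have "\<bar>pw a (p - 2) * d * b\<bar> = s * ((pw a (p - 2) * \<bar>d\<bar>) * (\<bar>b\<bar> / s))"
    using assms by (simp add: abs_mult pw_nonneg)
  also have "\<dots> \<le> s * ((pw a (p - 2) * \<bar>d\<bar>) powr q + (\<bar>b\<bar> / s) powr p)"
    using assms unfolding q_def by (intro mult_left_mono young2) (auto simp: pw_nonneg)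
  also have "(pw a (p - 2) * \<bar>d\<bar>) powr q = pw a (q * (p - 2)) * pw \<bar>d\<bar> q"
    using pw_prod[of a "p - 2" q d] assms q0 by (simp add: pw_def)
  also have "(\<bar>b\<bar> / s) powr p = pw (\<bar>b\<bar> / s) p" using assms by (simp add: pw_def)
  finally show ?thesis unfolding q_def .
qed

lemma sum_powr4:
  fixes X Y r :: real
  assumes "X \<ge> 0" "Y \<ge> 0" "0 < r" "r \<le> 2"
  shows "(X + Y) powr r \<le> 4 * (X powr r + Y powr r)"
proof -
  define m where "m = max X Y"
  have "(X + Y) powr r \<le> (2 * m) powr r" using assms by (intro powr_mono2) (auto simp: m_def)
  also have "\<dots> = 2 powr r * m powr r" using assms by (simp add: powr_mult m_def)
  also have "\<dots> \<le> 4 * m powr r"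
  proof (intro mult_right_mono)
    have "2 powr r \<le> 2 powr (2::real)" using assms by (intro powr_mono) auto
    thus "2 powr r \<le> 4" by simp
  qed simp
  also have "m powr r \<le> X powr r + Y powr r" by (simp add: m_def max_def)
  hence "4 * m powr r \<le> 4 * (X powr r + Y powr r)" by simp
  finally show ?thesis .
qed

lemma scale_powr:
  fixes t l r :: real
  assumes "t \<ge> 0" "l \<ge> 1" "r \<ge> 1"
  shows "(t / l) powr r \<le> t powr r / l"
proof -
  have "(t / l) powr r = t powr r / l powr r" using assms by (simp add: powr_divide)
  also have "\<dots> \<le> t powr r / l"
  proof (intro divide_left_mono)
    show "l \<le> l powr r" using powr_mono[of 1 r l] assms by simp
  qed (use assms in auto)
  finally show ?thesis .
qed



lemma int_bound:
  fixes f g :: "'a \<Rightarrow> real"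
  assumes "integrable M f" "g \<in> borel_measurable M" "\<And>x. x \<in> space M \<Longrightarrow> \<bar>g x\<bar> \<le> K * f x"
  shows "integrable M g"
proof -
  have i: "integrable M (\<lambda>x. K * f x)" using assms(1) by simp
  have ae: "AE x in M. norm (g x) \<le> norm (K * f x)"
    using assms(3) by (intro AE_I2) force
  show ?thesis by (rule Bochner_Integration.integrable_bound[OF i assms(2) ae])
qed

lemma pnorm_form:
  fixes \<Omega> :: "(real^'n::finite) set"
  assumes "\<forall>x\<in>\<Omega>. 2 \<le> p0 x"
  shows "S_pnorm \<Omega> (\<lambda>x. (p0 x / (p0 x - 1)) * (p0 x - 2)) (\<lambda>x. p0 x / (p0 x - 1)) \<alpha> u Du =
    Inf {s. s > 0 \<and> (\<integral>x. pw (\<bar>u x\<bar> / s) (\<alpha> x) \<partial>lebesgue_on \<Omega>) +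
      (\<Sum>i\<in>UNIV. \<integral>x. pw \<bar>u x\<bar> ((p0 x / (p0 x - 1)) * (p0 x - 2)) * pw \<bar>Du i x\<bar> (p0 x / (p0 x - 1)) / s powr p0 x
        \<partial>lebesgue_on \<Omega>) \<le> 1}"
proof -
  have tr: "(\<integral>x. pw \<bar>pw \<bar>u x\<bar> ((p0 x / (p0 x - 1)) * (p0 x - 2) / (p0 x / (p0 x - 1))) * Du i x
        / pw s ((p0 x / (p0 x - 1)) * (p0 x - 2) / (p0 x / (p0 x - 1)) + 1)\<bar> (p0 x / (p0 x - 1)) \<partial>lebesgue_on \<Omega>)
     = (\<integral>x. pw \<bar>u x\<bar> ((p0 x / (p0 x - 1)) * (p0 x - 2)) * pw \<bar>Du i x\<bar> (p0 x / (p0 x - 1)) / s powr p0 x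
        \<partial>lebesgue_on \<Omega>)" if s: "s > 0" for s i
    by (rule Bochner_Integration.integral_cong[OF refl], rule key_pw) (use s assms in auto)
  show ?thesis unfolding S_pnorm_def
    by (rule arg_cong[where f=Inf], rule Collect_cong) (use tr in auto)
qed



lemma g_pt:
  fixes G a c0v c1v al C0 s1 lam sg :: real
  assumes G: "\<bar>G\<bar> \<le> c0v * pw a (al - 1) + c1v" and c0: "\<bar>c0v\<bar> \<le> C0"
    and a: "a \<ge> 0" and c1: "c1v \<ge> 0" and al: "al > 2" and s1: "s1 > 0"
    and lam: "lam \<ge> 1" and sg: "sg = lam * max 1 s1"
  shows "pw (\<bar>G\<bar> / sg) (al / (al - 1)) \<le> 4 * ((max 1 C0)^2 * pw a al + pw (\<bar>c1v\<bar> / s1) (al / (al - 1))) / lam"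
proof -
  define rr where "rr = al / (al - 1)"
  define C where "C = max 1 C0"
  have rr1: "1 \<le> rr" "rr \<le> 2" "0 < rr" using al by (auto simp: rr_def field_simps)
  have rra: "(al - 1) * rr = al" using al by (simp add: rr_def)
  have C1: "1 \<le> C" by (simp add: C_def)
  have m1: "1 \<le> max 1 s1" by simp
  have "lam * 1 \<le> lam * max 1 s1" using lam m1 by (intro mult_left_mono) auto
  hence l1: "lam \<le> sg" using sg by simp
  hence sgl: "lam \<le> sg" "1 \<le> sg" using lam by linarith+
  have m2: "1 \<le> max 1 s1 / s1" using s1 by simp
  have "lam * 1 \<le> lam * (max 1 s1 / s1)" using lam m2 by (intro mult_left_mono) auto
  also have "lam * (max 1 s1 / s1) = sg / s1" using sg by simp
  finally have sgs1: "lam \<le> sg / s1" by simp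
  have pwa: "pw a (al - 1) = a powr (al - 1)" using al by (simp add: pw_def)
  have t0: "0 \<le> a powr (al - 1)" by simp
  have "\<bar>G\<bar> \<le> C * a powr (al - 1) + c1v"
  proof -
    have "c0v * a powr (al - 1) \<le> C * a powr (al - 1)"
      using c0 t0 by (intro mult_right_mono) (auto simp: C_def)
    moreover have "\<bar>G\<bar> \<le> c0v * a powr (al - 1) + c1v" using G pwa by simp
    ultimately show ?thesis by linarith
  qed
  hence Gs: "\<bar>G\<bar> / sg \<le> C * a powr (al - 1) / sg + c1v / sg"
    using sgl by (simp add: divide_right_mono add_divide_distrib[symmetric])
  define X where "X = C * a powr (al - 1) / sg"
  define Y where "Y = c1v / sg"
  have X0: "X \<ge> 0" "Y \<ge> 0" using C1 sgl c1 by (auto simp: X_def Y_def)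
  have "pw (\<bar>G\<bar> / sg) rr = (\<bar>G\<bar> / sg) powr rr" using rr1 by (simp add: pw_def)
  also have "\<dots> \<le> (X + Y) powr rr" using Gs rr1 sgl by (intro powr_mono2) (auto simp: X_def Y_def)
  also have "\<dots> \<le> 4 * (X powr rr + Y powr rr)" using X0 rr1 by (intro sum_powr4) auto
  also have "X powr rr \<le> C ^ 2 * pw a al / lam"
  proof -
    have "X powr rr \<le> (C * a powr (al - 1)) powr rr / sg"
      unfolding X_def using C1 sgl rr1 by (intro scale_powr) auto
    also have "(C * a powr (al - 1)) powr rr = C powr rr * a powr al"
      using C1 a by (simp add: powr_mult powr_powr rra)
    also have "C powr rr \<le> C ^ 2"
    proof -
      have "C powr rr \<le> C powr (2::real)" using C1 rr1 by (intro powr_mono) auto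
      moreover have "C powr (2::real) = C ^ 2" using C1 by (subst powr_numeral) auto
      ultimately show ?thesis by simp
    qed
    hence "C powr rr * a powr al / sg \<le> C ^ 2 * a powr al / sg"
      using sgl by (intro divide_right_mono mult_right_mono) auto
    also have "\<dots> \<le> C ^ 2 * a powr al / lam"
      using sgl lam by (intro divide_left_mono) auto
    also have "a powr al = pw a al" using al by (simp add: pw_def)
    finally show ?thesis by simp
  qed
  also have "Y powr rr \<le> pw (\<bar>c1v\<bar> / s1) rr / lam"
  proof -
    have Y': "Y = (c1v / s1) / (sg / s1)" using s1 by (simp add: Y_def)
    have "Y powr rr \<le> (c1v / s1) powr rr / (sg / s1)"
    proof -
      have q1: "1 \<le> sg / s1" using sgs1 lam by linarith
      have q2: "0 \<le> c1v / s1" using c1 s1 by simp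
      show ?thesis unfolding Y' by (rule scale_powr[OF q2 q1 rr1(1)])
    qed
    also have "\<dots> \<le> (c1v / s1) powr rr / lam"
    proof (rule divide_left_mono)
      show "0 < (sg / s1) * lam" using sgs1 lam by (intro mult_pos_pos) linarith+
    qed (use sgs1 c1 s1 in auto)
    also have "(c1v / s1) powr rr = pw (\<bar>c1v\<bar> / s1) rr" using c1 rr1 by (simp add: pw_def)
    finally show ?thesis .
  qed
  finally have "pw (\<bar>G\<bar> / sg) rr \<le> 4 * (C ^ 2 * pw a al / lam + pw (\<bar>c1v\<bar> / s1) rr / lam)"
    by simp
  thus ?thesis by (simp add: rr_def C_def add_divide_distrib)
qed



theorem lemma4p3:
  fixes \<Omega> :: "(real^'n) set"
    and p0 p1 \<alpha> c0 c1 c2 :: "real^'n \<Rightarrow> real"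
    and c :: "real^'n \<Rightarrow> real \<Rightarrow> real"
  assumes dim: "CARD('n) \<ge> 3"
    and dom: "bounded \<Omega>" "lipschitz_domain \<Omega>"
    and p0_meas: "p0 \<in> borel_measurable (lebesgue_on \<Omega>)"
    and p0_bd: "\<forall>x\<in>\<Omega>. 2 \<le> p0 x" "\<exists>P. \<forall>x\<in>\<Omega>. p0 x \<le> P"
    and p0_C1: "continuous_on (closure \<Omega>) p0"
       "\<exists>G :: real^'n \<Rightarrow> real^'n. continuous_on (closure \<Omega>) G \<and>
           (\<forall>x\<in>\<Omega>. (p0 has_derivative (\<lambda>h. G x \<bullet> h)) (at x))"
    and p1_meas: "p1 \<in> borel_measurable (lebesgue_on \<Omega>)"
    and p1_bd: "\<exists>m>1. \<forall>x\<in>\<Omega>. m \<le> p1 x" "\<exists>P. \<forall>x\<in>\<Omega>. p1 x \<le> P"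
    and p1_C0: "continuous_on (closure \<Omega>) p1"
    and \<alpha>_meas: "\<alpha> \<in> borel_measurable (lebesgue_on \<Omega>)"
    and \<alpha>_bd: "\<forall>x\<in>\<Omega>. 1 \<le> \<alpha> x" "\<exists>A. \<forall>x\<in>\<Omega>. \<alpha> x \<le> A"
    and \<alpha>_p0: "\<exists>\<epsilon>>0. \<forall>x\<in>\<Omega>. p0 x + \<epsilon> \<le> \<alpha> x"
    and c_car: "\<forall>\<tau>. (\<lambda>x. c x \<tau>) \<in> borel_measurable (lebesgue_on \<Omega>)"
       "AE x in lebesgue_on \<Omega>. continuous_on UNIV (c x)"
    and c_growth: "AE x in lebesgue_on \<Omega>. \<forall>\<tau>. \<bar>c x \<tau>\<bar> \<le> c0 x * pw \<bar>\<tau>\<bar> (\<alpha> x - 1) + c1 x"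
    and c_coerc: "AE x in lebesgue_on \<Omega>. \<forall>\<tau>. c x \<tau> * \<tau> \<ge> c2 x * pw \<bar>\<tau>\<bar> (\<alpha> x)"
    and c0_Linf: "c0 \<in> borel_measurable (lebesgue_on \<Omega>)" "\<exists>C. AE x in lebesgue_on \<Omega>. \<bar>c0 x\<bar> \<le> C"
    and c2_Linf: "c2 \<in> borel_measurable (lebesgue_on \<Omega>)" "\<exists>C. AE x in lebesgue_on \<Omega>. \<bar>c2 x\<bar> \<le> C"
    and c1_L: "Lvar \<Omega> (\<lambda>x. \<alpha> x / (\<alpha> x - 1)) c1" "\<forall>x\<in>\<Omega>. c1 x \<ge> 0"
    and c2_pos: "\<exists>Ct>0. AE x in lebesgue_on \<Omega>. c2 x \<ge> Ct"
  shows "\<forall>M. \<exists>K. \<forall>u Du.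
     S0_mem \<Omega> (\<lambda>x. (p0 x / (p0 x - 1)) * (p0 x - 2)) (\<lambda>x. p0 x / (p0 x - 1)) \<alpha> u Du \<and>
     S_pnorm \<Omega> (\<lambda>x. (p0 x / (p0 x - 1)) * (p0 x - 2)) (\<lambda>x. p0 x / (p0 x - 1)) \<alpha> u Du \<le> M
     \<longrightarrow> (\<exists>(f :: (real^'n \<Rightarrow> real) \<Rightarrow> real) g Kf.
            (\<forall>\<phi> \<psi> a b. test_fun \<Omega> \<phi> \<and> test_fun \<Omega> \<psi> \<longrightarrow>
                f (\<lambda>x. a * \<phi> x + b * \<psi> x) = a * f \<phi> + b * f \<psi>) \<and>
            (\<forall>\<phi>. test_fun \<Omega> \<phi> \<longrightarrow> \<bar>f \<phi>\<bar> \<le> Kf * sob_norm \<Omega> p0 \<phi>) \<and>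
            Lvar \<Omega> (\<lambda>x. \<alpha> x / (\<alpha> x - 1)) g \<and>
            Kf + lux \<Omega> (\<lambda>x. \<alpha> x / (\<alpha> x - 1)) g \<le> K \<and>
            (\<forall>\<phi>. test_fun \<Omega> \<phi> \<longrightarrow>
               (\<Sum>i\<in>UNIV. \<integral>x. pw \<bar>u x\<bar> (p0 x - 2) * Du i x * pd i \<phi> x \<partial>lebesgue_on \<Omega>)
               + (\<integral>x. c x (u x) * \<phi> x \<partial>lebesgue_on \<Omega>)
               = f \<phi> + (\<integral>x. g x * \<phi> x \<partial>lebesgue_on \<Omega>)))"
proof -
  have Oo: "open \<Omega>" using dom(2) unfolding lipschitz_domain_def by blast
  have O: "\<Omega> \<in> sets lebesgue" using Oo by (rule open_sets_lebesgue)
  have lm: "\<Omega> \<in> lmeasurable" using O dom(1) by (simp add: bounded_set_imp_lmeasurable)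
  have spO: "space (lebesgue_on \<Omega>) = \<Omega>" by simp
  obtain P where P: "\<forall>x\<in>\<Omega>. p0 x \<le> P" using p0_bd(2) by blast
  obtain A where A: "\<forall>x\<in>\<Omega>. \<alpha> x \<le> A" using \<alpha>_bd(2) by blast
  obtain \<epsilon> where eps: "\<epsilon> > 0" "\<forall>x\<in>\<Omega>. p0 x + \<epsilon> \<le> \<alpha> x" using \<alpha>_p0 by blast
  have p0ge: "2 \<le> p0 x" if "x \<in> \<Omega>" for x using p0_bd(1) that by blast
  have agt: "2 < \<alpha> x" if "x \<in> \<Omega>" for x using eps p0ge[OF that] that by fastforce
  obtain C0 where C0: "AE x in lebesgue_on \<Omega>. \<bar>c0 x\<bar> \<le> C0" using c0_Linf(2) by blast
  define r where "r x = \<alpha> x / (\<alpha> x - 1)" for x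
  obtain s1 where s1: "s1 > 0" "integrable (lebesgue_on \<Omega>) (\<lambda>x. pw (\<bar>c1 x\<bar> / s1) (r x))"
    using c1_L(1) unfolding Lvar_def r_def by blast
  define J where "J = (\<integral>x. pw (\<bar>c1 x\<bar> / s1) (r x) \<partial>lebesgue_on \<Omega>)"
  have J0: "0 \<le> J" unfolding J_def using s1(1) by (intro integral_nonneg_AE AE_I2) (simp add: pw_nonneg)
  define D where "D = (max 1 C0) ^ 2"
  have D1: "1 \<le> D" unfolding D_def by (simp add: one_le_power)
  note [measurable] = p0_meas \<alpha>_meas
  have rm[measurable]: "r \<in> borel_measurable (lebesgue_on \<Omega>)" unfolding r_def by measurable
  define Kof where "Kof M = (max 1 (M + 1)) powr P + 1 +
     (1 + 4 * (D * (max 1 (M + 1)) powr A + J)) * max 1 s1" for M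
  show ?thesis
  proof (intro allI, rule_tac x="Kof M" in exI, intro allI impI, goal_cases)
    case (1 M u Du)
    define R where "R = max 1 (M + 1)"
    define CF where "CF = R powr P"
    define Cu where "Cu = R powr A"
    define lam where "lam = 1 + 4 * (D * Cu + J)"
    define sg where "sg = lam * max 1 s1"
    have KofM: "Kof M = CF + 1 + sg" by (simp add: Kof_def CF_def Cu_def lam_def sg_def R_def)
    have R1: "1 \<le> R" by (simp add: R_def)
    have CF0: "0 \<le> CF" "0 \<le> Cu" by (simp_all add: CF_def Cu_def)
    have lam1: "1 \<le> lam" using D1 J0 CF0 by (simp add: lam_def)
    have uint: "integrable (lebesgue_on \<Omega>) u"
      and Iu: "integrable (lebesgue_on \<Omega>) (\<lambda>x. pw \<bar>u x\<bar> (\<alpha> x))"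
      and PI: "\<And>i. integrable (lebesgue_on \<Omega>) (\<lambda>x. pw \<bar>u x\<bar> (p0 x / (p0 x - 1) * (p0 x - 2)) * pw \<bar>Du i x\<bar> (p0 x / (p0 x - 1)))"
      and Zw: "\<And>i. weak_deriv UNIV i (zero_ext \<Omega> u) (zero_ext \<Omega> (Du i))"
      using 1 unfolding S0_mem_def S_mem_def by auto
    define Pf where "Pf i x = pw \<bar>u x\<bar> (p0 x / (p0 x - 1) * (p0 x - 2)) * pw \<bar>Du i x\<bar> (p0 x / (p0 x - 1))" for i x
    have PI': "integrable (lebesgue_on \<Omega>) (Pf i)" for i using PI unfolding Pf_def by simp
    have Pf0: "0 \<le> Pf i x" for i x unfolding Pf_def by (simp add: pw_nonneg)
    define Q where "Q s = (\<integral>x. pw (\<bar>u x\<bar> / s) (\<alpha> x) \<partial>lebesgue_on \<Omega>) +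
      (\<Sum>i\<in>UNIV. \<integral>x. Pf i x / s powr p0 x \<partial>lebesgue_on \<Omega>)" for s
    have pn: "Inf {s. s > 0 \<and> Q s \<le> 1} \<le> M"
      using 1 pnorm_form[OF p0_bd(1), of \<alpha> u Du] unfolding Q_def Pf_def by simp
    have um[measurable]: "u \<in> borel_measurable (lebesgue_on \<Omega>)" using uint by (rule borel_measurable_integrable)
    have Dm[measurable]: "Du i \<in> borel_measurable (lebesgue_on \<Omega>)" for i
      using Zw[of i] Oo meas_from_zero_ext unfolding weak_deriv_def by blast
    have Pfm[measurable]: "Pf i \<in> borel_measurable (lebesgue_on \<Omega>)" for i unfolding Pf_def by measurable
    have a1: "1 \<le> \<alpha> x" if "x \<in> \<Omega>" for x using agt[OF that] by simp
    have p1: "1 \<le> p0 x" if "x \<in> \<Omega>" for x using p0ge[OF that] by simp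
    define IU where "IU = (\<integral>x. pw \<bar>u x\<bar> (\<alpha> x) \<partial>lebesgue_on \<Omega>)"
    define IP where "IP i = (\<integral>x. Pf i x \<partial>lebesgue_on \<Omega>)" for i
    have IU0: "0 \<le> IU" unfolding IU_def by (intro integral_nonneg_AE AE_I2) (simp add: pw_nonneg)
    have IP0: "0 \<le> IP i" for i unfolding IP_def by (intro integral_nonneg_AE AE_I2) (simp add: Pf0)
    define s00 where "s00 = 1 + IU + (\<Sum>i\<in>UNIV. IP i)"
    have s001: "1 \<le> s00" using IU0 IP0 by (simp add: s00_def sum_nonneg)
    have "Q s00 \<le> 1"
    proof -
      have qa: "(\<integral>x. pw (\<bar>u x\<bar> / s00) (\<alpha> x) \<partial>lebesgue_on \<Omega>) \<le> (\<integral>x. pw \<bar>u x\<bar> (\<alpha> x) / s00 \<partial>lebesgue_on \<Omega>)"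
      proof (rule int_le_gen)
        fix x assume x: "x \<in> space (lebesgue_on \<Omega>)"
        hence x': "x \<in> \<Omega>" by simp
        show "0 \<le> pw (\<bar>u x\<bar> / s00) (\<alpha> x)" using s001 by (simp add: pw_nonneg)
        have "pw (\<bar>u x\<bar> / s00) (\<alpha> x) = (\<bar>u x\<bar> / s00) powr \<alpha> x" using a1[OF x'] by (simp add: pw_def)
        also have "\<dots> \<le> \<bar>u x\<bar> powr \<alpha> x / s00" using s001 a1[OF x'] by (intro scale_powr) auto
        also have "\<dots> = pw \<bar>u x\<bar> (\<alpha> x) / s00" using a1[OF x'] by (simp add: pw_def)
        finally show "pw (\<bar>u x\<bar> / s00) (\<alpha> x) \<le> pw \<bar>u x\<bar> (\<alpha> x) / s00" .
      qed (use Iu in simp)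
      have qb: "(\<integral>x. Pf i x / s00 powr p0 x \<partial>lebesgue_on \<Omega>) \<le> (\<integral>x. Pf i x / s00 \<partial>lebesgue_on \<Omega>)" for i
      proof (rule int_le_gen)
        fix x assume x: "x \<in> space (lebesgue_on \<Omega>)"
        hence x': "x \<in> \<Omega>" by simp
        show "0 \<le> Pf i x / s00 powr p0 x" using Pf0 by simp
        have "s00 powr 1 \<le> s00 powr p0 x" using s001 p1[OF x'] by (intro powr_mono) auto
        hence "s00 \<le> s00 powr p0 x" using s001 by simp
        thus "Pf i x / s00 powr p0 x \<le> Pf i x / s00" using s001 Pf0 by (intro divide_left_mono) auto
      qed (use PI' in simp)
      have "Q s00 \<le> IU / s00 + (\<Sum>i\<in>UNIV. IP i / s00)"
        unfolding Q_def IU_def IP_def using qa qb by (intro add_mono sum_mono) auto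
      also have "\<dots> = (IU + (\<Sum>i\<in>UNIV. IP i)) / s00" by (simp add: sum_divide_distrib add_divide_distrib)
      also have "\<dots> \<le> 1" using s001 IU0 IP0 by (simp add: s00_def)
      finally show ?thesis .
    qed
    hence "s00 \<in> {s. s > 0 \<and> Q s \<le> 1}" using s001 by simp
    hence ne: "{s. s > 0 \<and> Q s \<le> 1} \<noteq> {}" by blast
    have "\<exists>s\<in>{s. s > 0 \<and> Q s \<le> 1}. s < M + 1"
      using pn ne by (subst cInf_less_iff[symmetric]) (auto simp: bdd_below_def intro!: exI[of _ 0] less_imp_le)
    then obtain s0 where s0: "s0 > 0" "Q s0 \<le> 1" "s0 < M + 1" by auto
    have s0R: "s0 \<le> R" using s0 by (simp add: R_def)
    define m0 where "m0 = min 1 s0"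
    have m0: "0 < m0" "m0 \<le> 1" "m0 \<le> s0" using s0 by (auto simp: m0_def)
    have T1int: "integrable (lebesgue_on \<Omega>) (\<lambda>x. pw (\<bar>u x\<bar> / s0) (\<alpha> x))"
    proof (rule int_bound[OF Iu, where K="1 / m0 powr A"])
      show "(\<lambda>x. pw (\<bar>u x\<bar> / s0) (\<alpha> x)) \<in> borel_measurable (lebesgue_on \<Omega>)" by measurable
      fix x assume "x \<in> space (lebesgue_on \<Omega>)"
      hence x': "x \<in> \<Omega>" by simp
      have "m0 powr A \<le> m0 powr \<alpha> x" using m0 A x' by (intro powr_mono') auto
      also have "\<dots> \<le> s0 powr \<alpha> x" using m0 a1[OF x'] by (intro powr_mono2) auto
      finally have mm: "m0 powr A \<le> s0 powr \<alpha> x" .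
      have "\<bar>pw (\<bar>u x\<bar> / s0) (\<alpha> x)\<bar> = \<bar>u x\<bar> powr \<alpha> x / s0 powr \<alpha> x"
        using a1[OF x'] s0 by (simp add: pw_def powr_divide)
      also have "\<dots> \<le> \<bar>u x\<bar> powr \<alpha> x / m0 powr A" using mm m0 by (intro divide_left_mono) auto
      also have "\<dots> = 1 / m0 powr A * pw \<bar>u x\<bar> (\<alpha> x)" using a1[OF x'] by (simp add: pw_def)
      finally show "\<bar>pw (\<bar>u x\<bar> / s0) (\<alpha> x)\<bar> \<le> 1 / m0 powr A * pw \<bar>u x\<bar> (\<alpha> x)" .
    qed
    have T2int: "integrable (lebesgue_on \<Omega>) (\<lambda>x. Pf i x / s0 powr p0 x)" for i
    proof (rule int_bound[OF PI', where K="1 / m0 powr P"])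
      show "(\<lambda>x. Pf i x / s0 powr p0 x) \<in> borel_measurable (lebesgue_on \<Omega>)" by measurable
      fix x assume "x \<in> space (lebesgue_on \<Omega>)"
      hence x': "x \<in> \<Omega>" by simp
      have "m0 powr P \<le> m0 powr p0 x" using m0 P x' by (intro powr_mono') auto
      also have "\<dots> \<le> s0 powr p0 x" using m0 p1[OF x'] by (intro powr_mono2) auto
      finally have mm: "m0 powr P \<le> s0 powr p0 x" .
      have "\<bar>Pf i x / s0 powr p0 x\<bar> = Pf i x / s0 powr p0 x" using Pf0 by simp
      also have "\<dots> \<le> Pf i x / m0 powr P" using mm m0 Pf0 by (intro divide_left_mono) auto
      finally show "\<bar>Pf i x / s0 powr p0 x\<bar> \<le> 1 / m0 powr P * Pf i x" by simp
    qed
    have T10: "0 \<le> (\<integral>x. pw (\<bar>u x\<bar> / s0) (\<alpha> x) \<partial>lebesgue_on \<Omega>)"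
      using s0 by (intro integral_nonneg_AE AE_I2) (simp add: pw_nonneg)
    have T20: "0 \<le> (\<integral>x. Pf i x / s0 powr p0 x \<partial>lebesgue_on \<Omega>)" for i
      using Pf0 by (intro integral_nonneg_AE AE_I2) simp
    have T1le: "(\<integral>x. pw (\<bar>u x\<bar> / s0) (\<alpha> x) \<partial>lebesgue_on \<Omega>) \<le> 1"
      using s0(2) T20 unfolding Q_def by (smt (verit) sum_nonneg)
    have T2le: "(\<integral>x. Pf i x / s0 powr p0 x \<partial>lebesgue_on \<Omega>) \<le> 1" for i
    proof -
      have "(\<integral>x. Pf i x / s0 powr p0 x \<partial>lebesgue_on \<Omega>) \<le> (\<Sum>j\<in>UNIV. \<integral>x. Pf j x / s0 powr p0 x \<partial>lebesgue_on \<Omega>)"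
        using T20 by (intro member_le_sum) auto
      thus ?thesis using s0(2) T10 unfolding Q_def by linarith
    qed
    have IUb: "IU \<le> Cu"
    proof -
      have "IU \<le> (\<integral>x. Cu * pw (\<bar>u x\<bar> / s0) (\<alpha> x) \<partial>lebesgue_on \<Omega>)"
        unfolding IU_def
      proof (rule int_le_gen)
        fix x assume "x \<in> space (lebesgue_on \<Omega>)"
        hence x': "x \<in> \<Omega>" by simp
        show "0 \<le> pw \<bar>u x\<bar> (\<alpha> x)" by (simp add: pw_nonneg)
        have "s0 powr \<alpha> x \<le> R powr \<alpha> x" using s0 s0R a1[OF x'] by (intro powr_mono2) auto
        also have "\<dots> \<le> Cu" unfolding Cu_def using R1 A x' by (intro powr_mono) auto
        finally have sc: "s0 powr \<alpha> x \<le> Cu" .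
        have "pw \<bar>u x\<bar> (\<alpha> x) = s0 powr \<alpha> x * pw (\<bar>u x\<bar> / s0) (\<alpha> x)"
          using a1[OF x'] s0 by (simp add: pw_def powr_divide)
        also have "\<dots> \<le> Cu * pw (\<bar>u x\<bar> / s0) (\<alpha> x)" using sc s0 by (intro mult_right_mono) (auto simp: pw_nonneg)
        finally show "pw \<bar>u x\<bar> (\<alpha> x) \<le> Cu * pw (\<bar>u x\<bar> / s0) (\<alpha> x)" .
      qed (rule integrable_mult_right[OF T1int])
      also have "\<dots> \<le> Cu" using T1le CF0 by (simp add: mult_left_le)
      finally show ?thesis .
    qed
    have IPb: "IP i \<le> CF" for i
    proof -
      have "IP i \<le> (\<integral>x. CF * (Pf i x / s0 powr p0 x) \<partial>lebesgue_on \<Omega>)"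
        unfolding IP_def
      proof (rule int_le_gen)
        fix x assume "x \<in> space (lebesgue_on \<Omega>)"
        hence x': "x \<in> \<Omega>" by simp
        show "0 \<le> Pf i x" by (rule Pf0)
        have "s0 powr p0 x \<le> R powr p0 x" using s0 s0R p1[OF x'] by (intro powr_mono2) auto
        also have "\<dots> \<le> CF" unfolding CF_def using R1 P x' by (intro powr_mono) auto
        finally have sc: "s0 powr p0 x \<le> CF" .
        have "Pf i x = s0 powr p0 x * (Pf i x / s0 powr p0 x)" using s0 by simp
        also have "\<dots> \<le> CF * (Pf i x / s0 powr p0 x)" using sc Pf0 by (intro mult_right_mono) auto
        finally show "Pf i x \<le> CF * (Pf i x / s0 powr p0 x)" .
      qed (rule integrable_mult_right[OF T2int])
      also have "\<dots> = CF * (\<integral>x. Pf i x / s0 powr p0 x \<partial>lebesgue_on \<Omega>)" by (rule integral_mult_right_zero)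
      also have "\<dots> \<le> CF" using T2le[of i] CF0 by (intro mult_left_le)
      finally show ?thesis .
    qed
    define fF where "fF \<phi> = (\<Sum>i\<in>UNIV. \<integral>x. pw \<bar>u x\<bar> (p0 x - 2) * Du i x * pd i \<phi> x \<partial>lebesgue_on \<Omega>)" for \<phi>
    have luxne: "luxset \<Omega> p0 \<psi> \<noteq> {}" if c\<psi>: "continuous_on UNIV \<psi>" for \<psi>
    proof -
      obtain B where B: "\<forall>x\<in>\<Omega>. \<bar>\<psi> x\<bar> \<le> B" using cont_bounded_on[OF c\<psi> dom(1)] by blast
      have "\<psi> \<in> borel_measurable (lebesgue_on \<Omega>)"
        using continuous_imp_measurable_on_sets_lebesgue[OF continuous_on_subset[OF c\<psi>] O] by simp
      thus ?thesis using luxset_nonempty[OF dom(1) O _ B p0_meas] p1 by blast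
    qed
    have hold: "integrable (lebesgue_on \<Omega>) (\<lambda>x. pw \<bar>u x\<bar> (p0 x - 2) * Du i x * pd i \<phi> x) \<and>
       \<bar>\<integral>x. pw \<bar>u x\<bar> (p0 x - 2) * Du i x * pd i \<phi> x \<partial>lebesgue_on \<Omega>\<bar> \<le> lux \<Omega> p0 (pd i \<phi>) * (CF + 1)"
      if tf: "test_fun \<Omega> \<phi>" for \<phi> i
    proof -
      define \<psi> where "\<psi> = pd i \<phi>"
      have cont: "continuous_on UNIV \<psi>" unfolding \<psi>_def by (rule test_pd_cont[OF tf])
      have \<psi>m[measurable]: "\<psi> \<in> borel_measurable (lebesgue_on \<Omega>)"
        using continuous_imp_measurable_on_sets_lebesgue[OF continuous_on_subset[OF cont] O] by simp
      have ne: "luxset \<Omega> p0 \<psi> \<noteq> {}" by (rule luxne[OF cont])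
      have each: "integrable (lebesgue_on \<Omega>) (\<lambda>x. pw \<bar>u x\<bar> (p0 x - 2) * Du i x * \<psi> x) \<and>
         \<bar>\<integral>x. pw \<bar>u x\<bar> (p0 x - 2) * Du i x * \<psi> x \<partial>lebesgue_on \<Omega>\<bar> \<le> s * (CF + 1)"
        if s: "s \<in> luxset \<Omega> p0 \<psi>" for s
      proof -
        have s0': "s > 0" and Li: "integrable (lebesgue_on \<Omega>) (\<lambda>x. pw (\<bar>\<psi> x\<bar> / s) (p0 x))"
          and Ll: "(\<integral>x. pw (\<bar>\<psi> x\<bar> / s) (p0 x) \<partial>lebesgue_on \<Omega>) \<le> 1"
          using s unfolding luxset_def by auto
        define bd where "bd x = s * (Pf i x + pw (\<bar>\<psi> x\<bar> / s) (p0 x))" for x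
        have bdi: "integrable (lebesgue_on \<Omega>) bd" unfolding bd_def using PI' Li by auto
        have pt: "\<bar>pw \<bar>u x\<bar> (p0 x - 2) * Du i x * \<psi> x\<bar> \<le> bd x" if "x \<in> space (lebesgue_on \<Omega>)" for x
        proof -
          have x': "x \<in> \<Omega>" using that by simp
          show ?thesis
            using holder_pt[of "\<bar>u x\<bar>" s "p0 x" "Du i x" "\<psi> x"] s0' p0ge[OF x'] unfolding bd_def Pf_def by simp
        qed
        have int: "integrable (lebesgue_on \<Omega>) (\<lambda>x. pw \<bar>u x\<bar> (p0 x - 2) * Du i x * \<psi> x)"
        proof (rule int_bound[OF bdi, where K=1])
          show "(\<lambda>x. pw \<bar>u x\<bar> (p0 x - 2) * Du i x * \<psi> x) \<in> borel_measurable (lebesgue_on \<Omega>)" by measurable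
        qed (use pt in simp)
        have "\<bar>\<integral>x. pw \<bar>u x\<bar> (p0 x - 2) * Du i x * \<psi> x \<partial>lebesgue_on \<Omega>\<bar> \<le> integral\<^sup>L (lebesgue_on \<Omega>) bd"
          by (rule abs_int_le[OF pt bdi])
        also have "integral\<^sup>L (lebesgue_on \<Omega>) bd = s * (IP i + (\<integral>x. pw (\<bar>\<psi> x\<bar> / s) (p0 x) \<partial>lebesgue_on \<Omega>))"
          unfolding bd_def IP_def using PI' Li by simp
        also have "\<dots> \<le> s * (CF + 1)" using IPb[of i] Ll s0' by (intro mult_left_mono add_mono) auto
        finally show ?thesis using int by blast
      qed
      from ne obtain s where "s \<in> luxset \<Omega> p0 \<psi>" by blast
      hence int: "integrable (lebesgue_on \<Omega>) (\<lambda>x. pw \<bar>u x\<bar> (p0 x - 2) * Du i x * \<psi> x)" using each by blast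
      have "\<bar>\<integral>x. pw \<bar>u x\<bar> (p0 x - 2) * Du i x * \<psi> x \<partial>lebesgue_on \<Omega>\<bar> \<le> Inf (luxset \<Omega> p0 \<psi>) * (CF + 1)"
        by (rule inf_bound[OF ne]) (use each CF0 in \<open>auto simp: luxset_def\<close>)
      thus ?thesis using int unfolding \<psi>_def lux_eq by simp
    qed
    have fbound: "\<bar>fF \<phi>\<bar> \<le> (CF + 1) * sob_norm \<Omega> p0 \<phi>" if tf: "test_fun \<Omega> \<phi>" for \<phi>
    proof -
      have "\<bar>fF \<phi>\<bar> \<le> (\<Sum>i\<in>UNIV. \<bar>\<integral>x. pw \<bar>u x\<bar> (p0 x - 2) * Du i x * pd i \<phi> x \<partial>lebesgue_on \<Omega>\<bar>)"
        unfolding fF_def by (rule sum_abs)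
      also have "\<dots> \<le> (\<Sum>i\<in>UNIV. lux \<Omega> p0 (pd i \<phi>) * (CF + 1))" using hold[OF tf] by (intro sum_mono) blast
      also have "\<dots> = (CF + 1) * (\<Sum>i\<in>UNIV. lux \<Omega> p0 (pd i \<phi>))" by (simp add: sum_distrib_left mult.commute)
      also have "\<dots> \<le> (CF + 1) * sob_norm \<Omega> p0 \<phi>"
      proof -
        have "0 \<le> lux \<Omega> p0 \<phi>" unfolding lux_eq
          by (rule inf_nonneg[OF luxne[OF test_cont[OF tf]]]) (auto simp: luxset_def)
        thus ?thesis unfolding sob_norm_def using CF0 by (intro mult_left_mono) auto
      qed
      finally show ?thesis .
    qed
    have flin: "fF (\<lambda>x. a * \<phi> x + b * \<psi> x) = a * fF \<phi> + b * fF \<psi>"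
      if tfs: "test_fun \<Omega> \<phi>" "test_fun \<Omega> \<psi>" for \<phi> \<psi> a b
    proof -
      have e: "(\<integral>x. pw \<bar>u x\<bar> (p0 x - 2) * Du i x * pd i (\<lambda>x. a * \<phi> x + b * \<psi> x) x \<partial>lebesgue_on \<Omega>)
          = a * (\<integral>x. pw \<bar>u x\<bar> (p0 x - 2) * Du i x * pd i \<phi> x \<partial>lebesgue_on \<Omega>)
            + b * (\<integral>x. pw \<bar>u x\<bar> (p0 x - 2) * Du i x * pd i \<psi> x \<partial>lebesgue_on \<Omega>)" for i
      proof -
        have "(\<integral>x. pw \<bar>u x\<bar> (p0 x - 2) * Du i x * pd i (\<lambda>x. a * \<phi> x + b * \<psi> x) x \<partial>lebesgue_on \<Omega>)
          = (\<integral>x. a * (pw \<bar>u x\<bar> (p0 x - 2) * Du i x * pd i \<phi> x)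
                 + b * (pw \<bar>u x\<bar> (p0 x - 2) * Du i x * pd i \<psi> x) \<partial>lebesgue_on \<Omega>)"
          by (rule Bochner_Integration.integral_cong[OF refl]) (simp add: pd_lin[OF tfs] algebra_simps)
        also have "\<dots> = a * (\<integral>x. pw \<bar>u x\<bar> (p0 x - 2) * Du i x * pd i \<phi> x \<partial>lebesgue_on \<Omega>)
            + b * (\<integral>x. pw \<bar>u x\<bar> (p0 x - 2) * Du i x * pd i \<psi> x \<partial>lebesgue_on \<Omega>)"
          using hold[OF tfs(1), of i] hold[OF tfs(2), of i] by simp
        finally show ?thesis .
      qed
      show ?thesis unfolding fF_def e by (simp add: sum.distrib sum_distrib_left)
    qed
    define g where "g x = c x (u x)" for x
    have gm[measurable]: "g \<in> borel_measurable (lebesgue_on \<Omega>)"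
      unfolding g_def using carath_meas[OF O _ c_car(2) um] c_car(1) by blast
    have sgpos: "0 < sg" using lam1 by (simp add: sg_def)
    have gbd: "AE x in lebesgue_on \<Omega>. pw (\<bar>g x\<bar> / sg) (r x) \<le> 4 * (D * pw \<bar>u x\<bar> (\<alpha> x) + pw (\<bar>c1 x\<bar> / s1) (r x)) / lam"
    proof -
      have "AE x in lebesgue_on \<Omega>. x \<in> \<Omega>" by (rule AE_I2) simp
      with c_growth C0 show ?thesis
      proof eventually_elim
        case (elim x)
        show ?case unfolding g_def r_def D_def
          by (rule g_pt[OF elim(1)[rule_format] elim(2) abs_ge_zero]) (use elim c1_L(2) agt s1 lam1 in \<open>auto simp: sg_def\<close>)
      qed
    qed
    define bdg where "bdg x = 4 * (D * pw \<bar>u x\<bar> (\<alpha> x) + pw (\<bar>c1 x\<bar> / s1) (r x)) / lam" for x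
    have bdgi: "integrable (lebesgue_on \<Omega>) bdg" unfolding bdg_def using Iu s1(2) by auto
    have gint: "integrable (lebesgue_on \<Omega>) (\<lambda>x. pw (\<bar>g x\<bar> / sg) (r x))"
    proof (rule Bochner_Integration.integrable_bound[OF bdgi])
      show "(\<lambda>x. pw (\<bar>g x\<bar> / sg) (r x)) \<in> borel_measurable (lebesgue_on \<Omega>)" by measurable
      show "AE x in lebesgue_on \<Omega>. norm (pw (\<bar>g x\<bar> / sg) (r x)) \<le> norm (bdg x)"
        using gbd
      proof eventually_elim
        case (elim x)
        have h: "\<bar>pw (\<bar>g x\<bar> / sg) (r x)\<bar> = pw (\<bar>g x\<bar> / sg) (r x)" using sgpos by (simp add: pw_nonneg)
        show ?case unfolding real_norm_def h using elim abs_ge_self[of "bdg x"] unfolding bdg_def by linarith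
      qed
    qed
    have gle: "(\<integral>x. pw (\<bar>g x\<bar> / sg) (r x) \<partial>lebesgue_on \<Omega>) \<le> 1"
    proof -
      have "(\<integral>x. pw (\<bar>g x\<bar> / sg) (r x) \<partial>lebesgue_on \<Omega>) \<le> integral\<^sup>L (lebesgue_on \<Omega>) bdg"
        by (rule integral_mono_AE[OF gint bdgi]) (use gbd in \<open>simp add: bdg_def\<close>)
      also have "integral\<^sup>L (lebesgue_on \<Omega>) bdg = 4 * (D * IU + J) / lam"
        unfolding bdg_def IU_def J_def using Iu s1(2) by simp
      also have "\<dots> \<le> 4 * (D * Cu + J) / lam"
        using IUb D1 lam1 by (intro divide_right_mono mult_left_mono add_mono) auto
      also have "\<dots> \<le> 1"
      proof -
        have z: "0 \<le> 4 * (D * Cu + J)" using D1 J0 CF0 by simp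
        hence "4 * (D * Cu + J) \<le> 1 * (1 + 4 * (D * Cu + J))" by simp
        thus ?thesis unfolding lam_def using z by (subst pos_divide_le_eq) auto
      qed
      finally show ?thesis .
    qed
    have gL: "Lvar \<Omega> (\<lambda>x. \<alpha> x / (\<alpha> x - 1)) g"
      unfolding Lvar_def using gm gint sgpos unfolding r_def by blast
    have gmem: "sg \<in> luxset \<Omega> (\<lambda>x. \<alpha> x / (\<alpha> x - 1)) g"
      unfolding luxset_def using sgpos gint gle unfolding r_def by simp
    have luxg: "lux \<Omega> (\<lambda>x. \<alpha> x / (\<alpha> x - 1)) g \<le> sg"
      unfolding lux_eq by (rule inf_lower[OF gmem]) (auto simp: luxset_def)
    show ?case
      apply (rule exI[where x=fF], rule exI[where x=g], rule exI[where x="CF + 1"])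
      apply (intro conjI allI impI)
          apply (use flin in blast)
         apply (use fbound in blast)
        apply (rule gL)
       apply (use luxg KofM in simp)
      apply (simp add: fF_def g_def)
      done
  qed
qed

end
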